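(* Let $1\le k\le n-1$ and $I,J\in V_{k,n}$. For $i\in\mathbb{Z}$ let $I^{+i}$ denote the image of $I$ under $x\mapsto x+i$ with values taken modulo $n$ in $\{1,\dots,n\}$ (re-sorted to an increasing vector). Then: (1) if $I$ and $J$ are weakly separated, then they are noncrossing; (2) if $I^{+i}$ and $J^{+i}$ are noncrossing for every $i\in[n]$, then $I$ and $J$ are weakly separated. Consequently the weak separation complex $\Delta^{Sep}_{k,n}$ equals the intersection over $i\in[n]$ of the images of $\Delta^{NC}_{k,n}$ under the cyclic shift by $i$.
   Context: $V_{k,n}$ denotes the set of integer vectors $I=(i_1,\dots,i_k)$ with $1\le i_1<\dots<i_k\le n$, identified with $k$-subsets of $[n]$. Two arcs $(p<p')$, $(q<q')$ cross if $p<q<p'<q'$ or $q<p<q'<p'$. $I,J\in V_{k,n}$ are noncrossing if for all $1\le a<b\le k$ with $i_\ell=j_\ell$ for all $a<\ell<b$, the arcs $(i_a<i_b)$ and $(j_a<j_b)$ do not cross. $\Delta^{NC}_{k,n}$ is the flag simplicial complex on $V_{k,n}$ whose faces are the sets of pairwise noncrossing vectors. $I,J\in V_{k,n}$ are weakly separated if, placing $1,\dots,n$ as the vertices of a convex $n$-gon in cyclic order, the convex hulls of $I\setminus J$ and $J\setminus I$ are disjoint. $\Delta^{Sep}_{k,n}$ is the simplicial complex on $V_{k,n}$ whose faces are the sets of pairwise weakly separated vectors. *)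

theory Defs
  imports "HOL-Analysis.Analysis"
begin

text \<open>V_{k,n}: k-subsets of [n] = {1..n}; the increasing vector of I is
  sorted_list_of_set I (0-indexed).\<close>
definition Vkn :: "nat \<Rightarrow> nat \<Rightarrow> nat set set" where
  "Vkn k n = {I. I \<subseteq> {1..n} \<and> card I = k}"

definition arcs_cross :: "nat \<Rightarrow> nat \<Rightarrow> nat \<Rightarrow> nat \<Rightarrow> bool" where
  "arcs_cross p p' q q' \<longleftrightarrow> (p < q \<and> q < p' \<and> p' < q') \<or> (q < p \<and> p < q' \<and> q' < p')"

definition noncrossing :: "nat \<Rightarrow> nat set \<Rightarrow> nat set \<Rightarrow> bool" where
  "noncrossing k I J \<longleftrightarrow>
     (let i = sorted_list_of_set I; j = sorted_list_of_set J in
      \<forall>a b. a < b \<and> b < k \<and> (\<forall>l. a < l \<and> l < b \<longrightarrow> i ! l = j ! l)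
        \<longrightarrow> \<not> arcs_cross (i ! a) (i ! b) (j ! a) (j ! b))"

definition polyvert :: "nat \<Rightarrow> nat \<Rightarrow> complex" where
  "polyvert n m = cis (2 * pi * real m / real n)"

definition weakly_separated :: "nat \<Rightarrow> nat set \<Rightarrow> nat set \<Rightarrow> bool" where
  "weakly_separated n I J \<longleftrightarrow>
     convex hull (polyvert n ` (I - J)) \<inter> convex hull (polyvert n ` (J - I)) = {}"

definition cshift :: "nat \<Rightarrow> int \<Rightarrow> nat set \<Rightarrow> nat set" where
  "cshift n i I = (\<lambda>x. nat ((int x + i - 1) mod int n) + 1) ` I"

definition DeltaNC :: "nat \<Rightarrow> nat \<Rightarrow> nat set set set" where
  "DeltaNC k n = {F. F \<subseteq> Vkn k n \<and> (\<forall>I\<in>F. \<forall>J\<in>F. noncrossing k I J)}"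

definition DeltaSep :: "nat \<Rightarrow> nat \<Rightarrow> nat set set set" where
  "DeltaSep k n = {F. F \<subseteq> Vkn k n \<and> (\<forall>I\<in>F. \<forall>J\<in>F. weakly_separated n I J)}"

definition shift_complex :: "nat \<Rightarrow> int \<Rightarrow> nat set set set \<Rightarrow> nat set set set" where
  "shift_complex n i D = (\<lambda>F. cshift n i ` F) ` D"

end

theory Submission
  imports Defs
begin


definition orient :: "complex \<Rightarrow> complex \<Rightarrow> complex \<Rightarrow> real" where
  "orient X Y Z = Im (cnj (Y - X) * (Z - X))"

lemma line_identity:
  fixes p1 p2 q1 q2 r1 r2 s1 s2 :: real
  defines "D \<equiv> (q1-p1)*(s2-r2) - (q2-p2)*(s1-r1)"
  defines "al \<equiv> (s1-r1)*(p2-r2) - (s2-r2)*(p1-r1)"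
  defines "ga \<equiv> (q1-p1)*(r2-p2) - (q2-p2)*(r1-p1)"
  shows "D*p1 + al*(q1-p1) = D*r1 - ga*(s1-r1)" "D*p2 + al*(q2-p2) = D*r2 - ga*(s2-r2)"
  unfolding D_def al_def ga_def by algebra+

lemma segs_meet:
  assumes a: "orient R S P > 0" and b: "orient R S Q < 0"
    and g: "orient P Q R < 0" and d: "orient P Q S > 0"
  shows "closed_segment P Q \<inter> closed_segment R S \<noteq> {}"
proof -
  define al where "al = orient R S P"
  define be where "be = orient R S Q"
  define ga where "ga = orient P Q R"
  define de where "de = orient P Q S"
  define t where "t = al / (al - be)"
  define u where "u = ga / (ga - de)"
  have t01: "0 \<le> t" "t \<le> 1" using a b unfolding t_def al_def be_def by (auto simp: field_simps)
  have u01: "0 \<le> u" "u \<le> 1" using g d unfolding u_def ga_def de_def by (auto simp: field_simps)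
  have ab: "al - be = (Re Q - Re P)*(Im S - Im R) - (Im Q - Im P)*(Re S - Re R)"
    unfolding al_def be_def orient_def by (simp add: algebra_simps)
  have gd: "ga - de = -((Re Q - Re P)*(Im S - Im R) - (Im Q - Im P)*(Re S - Re R))"
    unfolding ga_def de_def orient_def by (simp add: algebra_simps)
  have alx: "al = (Re S - Re R)*(Im P - Im R) - (Im S - Im R)*(Re P - Re R)"
    unfolding al_def orient_def by (simp add: algebra_simps)
  have gax: "ga = (Re Q - Re P)*(Im R - Im P) - (Im Q - Im P)*(Re R - Re P)"
    unfolding ga_def orient_def by (simp add: algebra_simps)
  define D where "D = (Re Q - Re P)*(Im S - Im R) - (Im Q - Im P)*(Re S - Re R)"
  have Dnz: "D \<noteq> 0" using a b ab D_def al_def be_def by auto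
  have L: "D*Re P + al*(Re Q-Re P) = D*Re R - ga*(Re S-Re R)"
          "D*Im P + al*(Im Q-Im P) = D*Im R - ga*(Im S-Im R)"
    using line_identity[of "Re Q" "Re P" "Im S" "Im R" "Im Q" "Im P" "Re S" "Re R"]
    unfolding D_def alx gax by simp_all
  have tD: "t = al / D" using ab D_def t_def by simp
  have gdD: "ga - de = - D" using gd D_def by simp
  have uD: "u = - ga / D" unfolding u_def gdD by simp
  have r1: "Re ((1 - t) *\<^sub>R P + t *\<^sub>R Q) = (D*Re P + al*(Re Q - Re P))/D"
    using Dnz by (simp add: tD field_simps)
  have r2: "Re ((1 - u) *\<^sub>R R + u *\<^sub>R S) = (D*Re R - ga*(Re S - Re R))/D"
    using Dnz by (simp add: uD field_simps)
  have i1: "Im ((1 - t) *\<^sub>R P + t *\<^sub>R Q) = (D*Im P + al*(Im Q - Im P))/D"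
    using Dnz by (simp add: tD field_simps)
  have i2: "Im ((1 - u) *\<^sub>R R + u *\<^sub>R S) = (D*Im R - ga*(Im S - Im R))/D"
    using Dnz by (simp add: uD field_simps)
  have "(1 - t) *\<^sub>R P + t *\<^sub>R Q = (1 - u) *\<^sub>R R + u *\<^sub>R S"
    by (rule complex_eqI) (simp_all only: r1 r2 i1 i2 L)
  then have "(1 - t) *\<^sub>R P + t *\<^sub>R Q \<in> closed_segment P Q \<inter> closed_segment R S"
    using t01 u01 by (auto simp: in_segment)
  then show ?thesis by blast
qed

lemma cis_diff: "cis y - cis x = 2 * \<i> * complex_of_real (sin ((y-x)/2)) * cis ((x+y)/2)"
proof -
  define m where "m = (x+y)/2"
  define e where "e = (y-x)/2"
  have y: "y = m + e" unfolding m_def e_def by (simp add: field_simps)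
  have x: "x = m - e" unfolding m_def e_def by (simp add: field_simps)
  show ?thesis unfolding y x
    by (rule complex_eqI) (simp_all add: cos_add cos_diff sin_add sin_diff algebra_simps)
qed

lemma orient_cis:
  "orient (cis x) (cis y) (cis z) = 4 * sin ((y-x)/2) * sin ((z-x)/2) * sin ((z-y)/2)"
proof -
  have "cnj (cis y - cis x) * (cis z - cis x)
      = 4 * complex_of_real (sin ((y-x)/2) * sin ((z-x)/2)) * (cnj (cis ((x+y)/2)) * cis ((x+z)/2))"
    unfolding cis_diff by (simp add: algebra_simps)
  also have "cnj (cis ((x+y)/2)) * cis ((x+z)/2) = cis ((x+z)/2 - (x+y)/2)"
    by (simp add: cis_cnj cis_mult)
  also have "(x+z)/2 - (x+y)/2 = (z-y)/2" by (simp add: field_simps)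
  finally show ?thesis unfolding orient_def by simp
qed


lemma cos_lt:
  assumes "0 \<le> h" "h < \<bar>t\<bar>" "\<bar>t\<bar> < 2*pi - h"
  shows "cos t < cos h"
proof -
  have ct: "cos t = cos \<bar>t\<bar>" by simp
  show ?thesis
  proof (cases "\<bar>t\<bar> \<le> pi")
    case True
    then show ?thesis unfolding ct using cos_monotone_0_pi[of h "\<bar>t\<bar>"] assms by auto
  next
    case False
    have "cos \<bar>t\<bar> = cos (2*pi - \<bar>t\<bar>)" by (simp add: cos_diff)
    moreover have "cos (2*pi - \<bar>t\<bar>) < cos h"
      using cos_monotone_0_pi[of h "2*pi - \<bar>t\<bar>"] assms False by auto
    ultimately show ?thesis unfolding ct by simp
  qed
qed

lemma polyvert_inner:
  "inner (cnj (cis (-m))) (polyvert n x) = cos (2*pi*real x/real n - m)"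
  unfolding polyvert_def inner_complex_def by (simp add: cos_diff)

lemma sep_hulls:
  fixes A B :: "nat set"
  assumes pq: "1 \<le> p" "p \<le> q" "q \<le> n"
    and A: "A \<subseteq> {p..q}" and B: "B \<subseteq> {1..n} - {p..q}"
  shows "convex hull (polyvert n ` A) \<inter> convex hull (polyvert n ` B) = {}"
proof -
  have n0: "real n > 0" using pq by simp
  define K where "K = pi / real n"
  have K0: "K > 0" using n0 by (simp add: K_def)
  define m where "m = K * (real p + real q)"
  define h where "h = K * (real q - real p)"
  define w where "w = cnj (cis (-m))"
  have val: "inner w (polyvert n x) = cos (K * (2 * real x - real p - real q))" for x
  proof -
    have "2*pi*real x/real n - m = K * (2 * real x - real p - real q)"
      unfolding m_def K_def using n0 by (simp add: field_simps)
    then show ?thesis unfolding w_def polyvert_inner by simp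
  qed
  have h0: "0 \<le> h" unfolding h_def using K0 pq by simp
  have inA: "cos h \<le> inner w (polyvert n x)" if "x \<in> {p..q}" for x
  proof -
    have "\<bar>2 * real x - real p - real q\<bar> \<le> real q - real p" using that by auto
    then have "\<bar>K * (2 * real x - real p - real q)\<bar> \<le> h"
      unfolding h_def abs_mult using K0 by (simp add: mult_left_mono)
    moreover have "h \<le> pi"
    proof -
      have "real q - real p \<le> real n" using pq by simp
      then have "K * (real q - real p) \<le> K * real n" using K0 by (simp add: mult_left_mono)
      then show ?thesis unfolding h_def using n0 by (simp add: K_def)
    qed
    ultimately have "cos h \<le> cos \<bar>K * (2 * real x - real p - real q)\<bar>"
      using cos_monotone_0_pi_le[of "\<bar>K * (2 * real x - real p - real q)\<bar>" h] by auto
    then show ?thesis unfolding val by simp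
  qed
  have inB: "inner w (polyvert n x) < cos h" if "x \<in> {1..n} - {p..q}" for x
  proof -
    have r: "real q - real p < \<bar>2 * real x - real p - real q\<bar>"
            "\<bar>2 * real x - real p - real q\<bar> < 2 * real n - (real q - real p)"
      using that pq by auto
    have "h < \<bar>K * (2 * real x - real p - real q)\<bar>"
      unfolding h_def abs_mult using K0 r(1) by simp
    moreover have "\<bar>K * (2 * real x - real p - real q)\<bar> < 2*pi - h"
    proof -
      have "\<bar>K * (2 * real x - real p - real q)\<bar> < K * (2 * real n - (real q - real p))"
        unfolding abs_mult using K0 r(2) by simp
      also have "\<dots> = 2*pi - h" unfolding h_def K_def using n0 by (simp add: field_simps)
      finally show ?thesis .
    qed
    ultimately show ?thesis unfolding val using cos_lt h0 by blast
  qed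
  have "convex hull (polyvert n ` A) \<subseteq> {z. inner w z \<ge> cos h}"
    by (rule hull_minimal) (use A inA in \<open>auto simp: convex_halfspace_ge\<close>)
  moreover have "convex hull (polyvert n ` B) \<subseteq> {z. inner w z < cos h}"
    by (rule hull_minimal) (use B inB in \<open>auto simp: convex_halfspace_lt\<close>)
  ultimately show ?thesis by fastforce
qed


definition intl :: "nat set \<Rightarrow> nat set \<Rightarrow> bool" where
  "intl A B \<longleftrightarrow> (\<exists>a b c d. a<b \<and> b<c \<and> c<d \<and> a\<in>A \<and> b\<in>B \<and> c\<in>A \<and> d\<in>B)"

lemma half_sin:
  assumes "1 \<le> x" "x < y" "y \<le> n"
  shows "sin ((2*pi*real y/real n - 2*pi*real x/real n)/2) > 0"
        "sin ((2*pi*real x/real n - 2*pi*real y/real n)/2) < 0"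
proof -
  have n0: "real n > 0" using assms by simp
  have e: "(2*pi*real y/real n - 2*pi*real x/real n)/2 = pi * ((real y - real x)/real n)"
    using n0 by (simp add: field_simps)
  have e2: "(2*pi*real x/real n - 2*pi*real y/real n)/2 = - (pi * ((real y - real x)/real n))"
    using n0 by (simp add: field_simps)
  have r: "0 < (real y - real x)/real n" "(real y - real x)/real n < 1" using assms n0
    by (auto simp: field_simps)
  have "0 < pi * ((real y - real x)/real n)" using r by (intro mult_pos_pos) auto
  moreover have "pi * ((real y - real x)/real n) < pi * 1"
    by (rule mult_strict_left_mono) (use r in auto)
  ultimately have s: "sin (pi * ((real y - real x)/real n)) > 0" by (intro sin_gt_zero) simp_all
  show "sin ((2*pi*real y/real n - 2*pi*real x/real n)/2) > 0" unfolding e using s .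
  show "sin ((2*pi*real x/real n - 2*pi*real y/real n)/2) < 0" unfolding e2 using s by simp
qed

lemma sgnA: assumes "a>0" "b<0" "c<0" shows "4*a*b*c > (0::real)"
proof -
  have "4*a > 0" using assms by simp
  then have "4*a*b < 0" using assms mult_pos_neg by blast
  then show ?thesis using assms mult_neg_neg by blast
qed
lemma sgnB: assumes "a>0" "b>0" "c<0" shows "4*a*b*c < (0::real)"
proof -
  have "4*a*b > 0" using assms by simp
  then show ?thesis using assms mult_pos_neg by blast
qed
lemma sgnC: assumes "a>0" "b>0" "c>0" shows "4*a*b*c > (0::real)"
  using assms by simp

lemma meet_poly:
  assumes "1 \<le> a" "a < b" "b < c" "c < d" "d \<le> n"
  shows "closed_segment (polyvert n a) (polyvert n c) \<inter> closed_segment (polyvert n b) (polyvert n d) \<noteq> {}"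
proof -
  define th where "th x = 2*pi*real x/real n" for x :: nat
  have pv: "polyvert n x = cis (th x)" for x unfolding polyvert_def th_def by simp
  have o: "orient (polyvert n x) (polyvert n y) (polyvert n z) =
     4 * sin ((th y - th x)/2) * sin ((th z - th x)/2) * sin ((th z - th y)/2)" for x y z
    unfolding pv by (rule orient_cis)
  have P: "sin ((th y - th x)/2) > 0" "sin ((th x - th y)/2) < 0" if "1 \<le> x" "x < y" "y \<le> n" for x y
    using half_sin[OF that] unfolding th_def by auto
  have s_ca: "sin ((th c - th a)/2) > 0" using P assms by auto
  have s_ba: "sin ((th b - th a)/2) > 0" using P assms by auto
  have s_bc: "sin ((th b - th c)/2) < 0" using P assms by auto
  have s_da: "sin ((th d - th a)/2) > 0" using P assms by auto
  have s_dc: "sin ((th d - th c)/2) > 0" using P assms by auto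
  have s_db: "sin ((th d - th b)/2) > 0" using P assms by auto
  have s_ab: "sin ((th a - th b)/2) < 0" using P assms by auto
  have s_ad: "sin ((th a - th d)/2) < 0" using P assms by auto
  have s_cb: "sin ((th c - th b)/2) > 0" using P assms by auto
  have s_cd: "sin ((th c - th d)/2) < 0" using P assms by auto
  show ?thesis
  proof (rule segs_meet)
    show "orient (polyvert n b) (polyvert n d) (polyvert n a) > 0" unfolding o
      using s_db s_ab s_ad by (rule sgnA)
    show "orient (polyvert n b) (polyvert n d) (polyvert n c) < 0" unfolding o
      using s_db s_cb s_cd by (rule sgnB)
    show "orient (polyvert n a) (polyvert n c) (polyvert n b) < 0" unfolding o
      using s_ca s_ba s_bc by (rule sgnB)
    show "orient (polyvert n a) (polyvert n c) (polyvert n d) > 0" unfolding o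
      using s_ca s_da s_dc by (rule sgnC)
  qed
qed


lemma intl_not_disj:
  assumes "intl A B" "A \<subseteq> {1..n}" "B \<subseteq> {1..n}"
  shows "convex hull (polyvert n ` A) \<inter> convex hull (polyvert n ` B) \<noteq> {}"
proof -
  obtain a b c d where h: "a<b" "b<c" "c<d" "a\<in>A" "b\<in>B" "c\<in>A" "d\<in>B"
    using assms(1) unfolding intl_def by blast
  have "1 \<le> a" "d \<le> n" using h assms by auto
  then have m: "closed_segment (polyvert n a) (polyvert n c) \<inter> closed_segment (polyvert n b) (polyvert n d) \<noteq> {}"
    using meet_poly h by auto
  have "closed_segment (polyvert n a) (polyvert n c) \<subseteq> convex hull (polyvert n ` A)"
    unfolding segment_convex_hull using h by (intro hull_mono) auto
  moreover have "closed_segment (polyvert n b) (polyvert n d) \<subseteq> convex hull (polyvert n ` B)"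
    unfolding segment_convex_hull using h by (intro hull_mono) auto
  ultimately show ?thesis using m by blast
qed

lemma structure_nonintl:
  fixes A B :: "nat set"
  assumes fin: "finite A" "finite B" and disj: "A \<inter> B = {}" and ne: "A \<noteq> {}"
    and n1: "\<not> intl A B" and n2: "\<not> intl B A"
  shows "(B \<inter> {Min A..Max A} = {}) \<or> (B \<noteq> {} \<and> A \<inter> {Min B..Max B} = {})"
proof (cases "B \<inter> {Min A..Max A} = {}")
  case False
  then obtain b where b: "b \<in> B" "Min A \<le> b" "b \<le> Max A" by auto
  have bA: "b \<notin> A" using b disj by auto
  have p: "Min A \<in> A" "Max A \<in> A" using fin ne by auto
  have pb: "Min A < b" "b < Max A" using b bA p by (metis le_neq_implies_less)+
  have Bin: "B \<subseteq> {Min A<..<Max A}"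
  proof
    fix x assume x: "x \<in> B"
    have "x \<noteq> Min A" "x \<noteq> Max A" using x p disj by auto
    moreover have "\<not> x > Max A"
    proof
      assume "x > Max A"
      then have "intl A B" unfolding intl_def using pb p x
        by (intro exI[of _ "Min A"] exI[of _ b] exI[of _ "Max A"] exI[of _ x]) (simp add: b)
      then show False using n1 by simp
    qed
    moreover have "\<not> x < Min A"
    proof
      assume "x < Min A"
      then have "intl B A" unfolding intl_def using pb p x
        by (intro exI[of _ x] exI[of _ "Min A"] exI[of _ b] exI[of _ "Max A"]) (simp add: b)
      then show False using n2 by simp
    qed
    ultimately show "x \<in> {Min A<..<Max A}" by auto
  qed
  have neB: "B \<noteq> {}" using b by auto
  have q: "Min B \<in> B" "Max B \<in> B" using fin neB by auto
  have "A \<inter> {Min B..Max B} = {}"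
  proof (rule ccontr)
    assume "A \<inter> {Min B..Max B} \<noteq> {}"
    then obtain a where a: "a \<in> A" "Min B \<le> a" "a \<le> Max B" by auto
    have "a \<noteq> Min B" "a \<noteq> Max B" using a q disj by auto
    then have "Min B < a" "a < Max B" using a by auto
    moreover have "Max B < Max A" using Bin q by auto
    ultimately have "intl B A" unfolding intl_def using a q p
      by (intro exI[of _ "Min B"] exI[of _ a] exI[of _ "Max B"] exI[of _ "Max A"]) simp
    then show False using n2 by simp
  qed
  then show ?thesis using neB by blast
qed simp

lemma ws_iff:
  assumes "I \<subseteq> {1..n}" "J \<subseteq> {1..n}"
  shows "weakly_separated n I J \<longleftrightarrow> \<not> intl (I-J) (J-I) \<and> \<not> intl (J-I) (I-J)"
proof
  assume ws: "weakly_separated n I J"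
  show "\<not> intl (I-J) (J-I) \<and> \<not> intl (J-I) (I-J)"
  proof (intro conjI notI)
    assume "intl (I-J) (J-I)"
    then show False using intl_not_disj[of "I-J" "J-I" n] assms ws
      unfolding weakly_separated_def by auto
  next
    assume "intl (J-I) (I-J)"
    then show False using intl_not_disj[of "J-I" "I-J" n] assms ws
      unfolding weakly_separated_def by auto
  qed
next
  assume h: "\<not> intl (I-J) (J-I) \<and> \<not> intl (J-I) (I-J)"
  have fin: "finite (I-J)" "finite (J-I)" using assms finite_subset by blast+
  show "weakly_separated n I J"
  proof (cases "I - J = {}")
    case True then show ?thesis unfolding weakly_separated_def True by simp
  next
    case neA: False
    have sub: "I - J \<subseteq> {1..n}" "J - I \<subseteq> {1..n}" using assms by auto
    have mem: "Min (I-J) \<in> I-J" "Max (I-J) \<in> I-J" using Min_in[OF fin(1) neA] Max_in[OF fin(1) neA] by auto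
    have mm: "1 \<le> Min (I-J)" "Min (I-J) \<le> Max (I-J)" "Max (I-J) \<le> n"
      using mem sub(1) Min_le[OF fin(1) mem(2)] by auto
    have dj: "(I-J) \<inter> (J-I) = {}" by blast
    from structure_nonintl[OF fin dj neA] h
    consider "(J-I) \<inter> {Min (I-J)..Max (I-J)} = {}"
      | "J - I \<noteq> {}" "(I-J) \<inter> {Min (J-I)..Max (J-I)} = {}" by blast
    then show ?thesis
    proof cases
      case 1
      have "convex hull (polyvert n ` (I-J)) \<inter> convex hull (polyvert n ` (J-I)) = {}"
        by (rule sep_hulls[OF mm]) (use fin neA sub 1 in auto)
      then show ?thesis unfolding weakly_separated_def .
    next
      case 2
      have mem2: "Min (J-I) \<in> J-I" "Max (J-I) \<in> J-I" using Min_in[OF fin(2) 2(1)] Max_in[OF fin(2) 2(1)] by auto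
      have mm2: "1 \<le> Min (J-I)" "Min (J-I) \<le> Max (J-I)" "Max (J-I) \<le> n"
        using mem2 sub(2) Min_le[OF fin(2) mem2(2)] by auto
      have "convex hull (polyvert n ` (J-I)) \<inter> convex hull (polyvert n ` (I-J)) = {}"
        by (rule sep_hulls[OF mm2]) (use fin 2 sub in auto)
      then show ?thesis unfolding weakly_separated_def by blast
    qed
  qed
qed


definition rk :: "nat set \<Rightarrow> nat \<Rightarrow> nat" where "rk S x = card {y\<in>S. y<x}"

lemma sl_strict: "finite S \<Longrightarrow> sorted_wrt (<) (sorted_list_of_set S)"
  by (simp add: strict_sorted_list_of_set)

lemma sl_nth_less_iff:
  assumes "finite S" "l < card S" "l' < card S"
  shows "(sorted_list_of_set S ! l < sorted_list_of_set S ! l') \<longleftrightarrow> l < l'"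
proof -
  have s: "sorted_wrt (<) (sorted_list_of_set S)" using sl_strict[OF assms(1)] .
  have len: "length (sorted_list_of_set S) = card S" by simp
  show ?thesis
  proof
    assume h: "sorted_list_of_set S ! l < sorted_list_of_set S ! l'"
    show "l < l'"
    proof (rule ccontr)
      assume "\<not> l < l'"
      then have "l' < l \<or> l' = l" by auto
      then show False
      proof
        assume "l' < l"
        then have "sorted_list_of_set S ! l' < sorted_list_of_set S ! l"
          using sorted_wrt_nth_less[OF s] assms len by auto
        then show False using h by simp
      qed (use h in simp)
    qed
  next
    assume "l < l'"
    then show "sorted_list_of_set S ! l < sorted_list_of_set S ! l'"
      using sorted_wrt_nth_less[OF s] assms len by auto
  qed
qed

lemma sl_nth_mem: "finite S \<Longrightarrow> l < card S \<Longrightarrow> sorted_list_of_set S ! l \<in> S"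
  by (metis length_sorted_list_of_set nth_mem set_sorted_list_of_set)

lemma rk_nth:
  assumes "finite S" "l < card S"
  shows "rk S (sorted_list_of_set S ! l) = l"
proof -
  let ?xs = "sorted_list_of_set S"
  have len: "length ?xs = card S" by simp
  have "{y\<in>S. y < ?xs ! l} = set (take l ?xs)"
  proof
    show "{y\<in>S. y < ?xs ! l} \<subseteq> set (take l ?xs)"
    proof
      fix y assume "y \<in> {y\<in>S. y < ?xs ! l}"
      then have y: "y \<in> set ?xs" "y < ?xs ! l" using assms by auto
      then obtain j where j: "j < length ?xs" "y = ?xs ! j" by (auto simp: in_set_conv_nth)
      then have "j < l" using sl_nth_less_iff[OF assms(1), of j l] y assms len by auto
      then show "y \<in> set (take l ?xs)" using j assms len
        by (metis in_set_conv_nth length_take min_less_iff_conj nth_take)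
    qed
  next
    show "set (take l ?xs) \<subseteq> {y\<in>S. y < ?xs ! l}"
    proof
      fix y assume "y \<in> set (take l ?xs)"
      then obtain j where j: "j < l" "y = ?xs ! j" using assms len
        by (auto simp: in_set_conv_nth)
      then show "y \<in> {y\<in>S. y < ?xs ! l}"
        using sl_nth_less_iff[OF assms(1), of j l] sl_nth_mem[OF assms(1), of j] assms by auto
    qed
  qed
  then have "rk S (?xs ! l) = card (set (take l ?xs))" by (simp add: rk_def)
  also have "\<dots> = l" using assms len by (simp add: distinct_card)
  finally show ?thesis .
qed

lemma nth_rk:
  assumes "finite S" "x \<in> S"
  shows "rk S x < card S" "sorted_list_of_set S ! (rk S x) = x"
proof -
  obtain j where j: "j < card S" "x = sorted_list_of_set S ! j"
    using assms by (metis in_set_conv_nth length_sorted_list_of_set set_sorted_list_of_set)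
  then have "rk S x = j" using rk_nth[OF assms(1) j(1)] by simp
  then show "rk S x < card S" "sorted_list_of_set S ! (rk S x) = x" using j by auto
qed

lemma rk_mono: "finite S \<Longrightarrow> x \<le> y \<Longrightarrow> rk S x \<le> rk S y"
  unfolding rk_def by (rule card_mono) auto

lemma rk_less: "finite S \<Longrightarrow> x \<in> S \<Longrightarrow> x < y \<Longrightarrow> rk S x < rk S y"
proof -
  assume a: "finite S" "x \<in> S" "x < y"
  have "insert x {z\<in>S. z<x} \<subseteq> {z\<in>S. z<y}" using a by auto
  then have "card (insert x {z\<in>S. z<x}) \<le> card {z\<in>S. z<y}" using a by (intro card_mono) auto
  then show ?thesis using a by (simp add: rk_def)
qed

lemma rk_split:
  assumes "finite S" "x \<in> S"
  shows "card {y\<in>S. x < y} = card S - rk S x - 1"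
proof -
  have "S = {y\<in>S. y<x} \<union> {x} \<union> {y\<in>S. x<y}" using assms by auto
  then have "card S = card {y\<in>S. y<x} + 1 + card {y\<in>S. x<y}"
    using assms by (metis (no_types, lifting) card_Un_disjoint card_insert_if finite_Un finite_insert
        mem_Collect_eq Un_insert_right sup_bot.right_neutral insert_disjoint(1) disjoint_iff less_irrefl
        add.commute Suc_eq_plus1 finite_subset  Int_iff not_less_iff_gr_or_eq subsetI empty_iff)
  then show ?thesis by (simp add: rk_def)
qed


lemma card_above_notin:
  assumes "finite S" "x \<notin> S"
  shows "card {y\<in>S. x < y} = card S - rk S x"
proof -
  have e: "S = {y\<in>S. y<x} \<union> {y\<in>S. x<y}" using assms by auto (metis linorder_neqE_nat)
  have "card S = card {y\<in>S. y<x} + card {y\<in>S. x<y}"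
    using assms by (subst e, subst card_Un_disjoint) auto
  then show ?thesis by (simp add: rk_def)
qed

lemma cross_intl:
  fixes I J :: "nat set"
  defines "i \<equiv> sorted_list_of_set I" and "j \<equiv> sorted_list_of_set J"
  assumes fin: "finite I" "finite J" and cI: "card I = k" and cJ: "card J = k"
    and ab: "a < b" "b < k"
    and mid: "\<forall>l. a<l \<and> l<b \<longrightarrow> i!l = j!l"
    and o1: "i!a < j!a" and o2: "j!a < i!b" and o3: "i!b < j!b"
  shows "\<exists>x y. x \<in> I - J \<and> x < j!a \<and> j!a \<in> J - I \<and> i!b \<in> I - J \<and> i!b < y \<and> y \<in> J - I"
proof -
  have ak: "a < k" using ab by simp
  have rIa: "rk I (i!a) = a" using rk_nth[OF fin(1)] ak cI by (simp add: i_def)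
  have rIb: "rk I (i!b) = b" using rk_nth[OF fin(1)] ab cI by (simp add: i_def)
  have rJa: "rk J (j!a) = a" using rk_nth[OF fin(2)] ak cJ by (simp add: j_def)
  have rJb: "rk J (j!b) = b" using rk_nth[OF fin(2)] ab cJ by (simp add: j_def)
  have iaI: "i!a \<in> I" using sl_nth_mem[OF fin(1)] ak cI by (simp add: i_def)
  have ibI: "i!b \<in> I" using sl_nth_mem[OF fin(1)] ab cI by (simp add: i_def)
  have jaJ: "j!a \<in> J" using sl_nth_mem[OF fin(2)] ak cJ by (simp add: j_def)
  have jbJ: "j!b \<in> J" using sl_nth_mem[OF fin(2)] ab cJ by (simp add: j_def)
  have jaI: "j!a \<notin> I"
  proof
    assume h: "j!a \<in> I"
    define r where "r = rk I (j!a)"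
    have "a < r" using rk_less[OF fin(1) iaI o1] rIa r_def by simp
    moreover have "r < b" using rk_less[OF fin(1) h o2] rIb r_def by simp
    moreover have "i!r = j!a" using nth_rk[OF fin(1) h] r_def i_def by simp
    ultimately have "j!r = j!a" using mid by auto
    moreover have "j!a < j!r" using sl_nth_less_iff[OF fin(2), of a r] \<open>a<r\<close> \<open>r<b\<close> ab cJ
      by (simp add: j_def)
    ultimately show False by simp
  qed
  have ibJ: "i!b \<notin> J"
  proof
    assume h: "i!b \<in> J"
    define r where "r = rk J (i!b)"
    have "a < r" using rk_less[OF fin(2) jaJ o2] rJa r_def by simp
    moreover have "r < b" using rk_less[OF fin(2) h o3] rJb r_def by simp
    moreover have "j!r = i!b" using nth_rk[OF fin(2) h] r_def j_def by simp
    ultimately have "i!r = i!b" using mid by auto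
    moreover have "i!r < i!b" using sl_nth_less_iff[OF fin(1), of r b] \<open>a<r\<close> \<open>r<b\<close> ab cI
      by (simp add: i_def)
    ultimately show False by simp
  qed
  have "\<exists>x. x \<in> I - J \<and> x < j!a"
  proof (rule ccontr)
    assume "\<not> ?thesis"
    then have "{y\<in>I. y < j!a} \<subseteq> {y\<in>J. y < j!a}" by auto
    then have "rk I (j!a) \<le> rk J (j!a)" unfolding rk_def using fin by (intro card_mono) auto
    moreover have "a < rk I (j!a)" using rk_less[OF fin(1) iaI o1] rIa by simp
    ultimately show False using rJa by simp
  qed
  moreover have "\<exists>y. i!b < y \<and> y \<in> J - I"
  proof (rule ccontr)
    assume "\<not> ?thesis"
    then have "{y\<in>J. i!b < y} \<subseteq> {y\<in>I. i!b < y}" by auto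
    then have "card {y\<in>J. i!b < y} \<le> card {y\<in>I. i!b < y}" using fin by (intro card_mono) auto
    moreover have "card {y\<in>J. i!b < y} = k - rk J (i!b)" using card_above_notin[OF fin(2) ibJ] cJ by simp
    moreover have "card {y\<in>I. i!b < y} = k - b - 1" using rk_split[OF fin(1) ibI] rIb cI by simp
    moreover have "rk J (i!b) \<le> b" using rk_mono[OF fin(2), of "i!b" "j!b"] o3 rJb by simp
    ultimately show False using ab by simp
  qed
  ultimately show ?thesis using jaJ jaI ibI ibJ by blast
qed


lemma split_count:
  assumes "finite S" "j < x"
  shows "rk S x = rk S j + (if j \<in> S then 1 else 0) + card {y\<in>S. j<y \<and> y<x}"
proof -
  have e: "{y\<in>S. y<x} = {y\<in>S. y<j} \<union> ({y\<in>S. y = j} \<union> {y\<in>S. j<y \<and> y<x})"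
    using assms by auto
  have f: "finite {y\<in>S. y<j}" "finite {y\<in>S. y = j}" "finite {y\<in>S. j<y \<and> y<x}"
    using assms by auto
  have "card {y\<in>S. y<x} = card {y\<in>S. y<j} + (card {y\<in>S. y = j} + card {y\<in>S. j<y \<and> y<x})"
    unfolding e using f by (subst card_Un_disjoint, auto)+
  moreover have "card {y\<in>S. y = j} = (if j \<in> S then 1 else 0)"
  proof (cases "j \<in> S")
    case True then have "{y\<in>S. y = j} = {j}" by auto
    then show ?thesis using True by simp
  next
    case False then have "{y\<in>S. y = j} = {}" by auto
    then show ?thesis using False by simp
  qed
  ultimately show ?thesis unfolding rk_def by simp
qed

lemma noncrossing_unfold:
  "noncrossing k I J \<longleftrightarrow> (\<forall>a b. a < b \<and> b < k \<and>
     (\<forall>l. a < l \<and> l < b \<longrightarrow> sorted_list_of_set I ! l = sorted_list_of_set J ! l)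
     \<longrightarrow> \<not> arcs_cross (sorted_list_of_set I ! a) (sorted_list_of_set I ! b)
                       (sorted_list_of_set J ! a) (sorted_list_of_set J ! b))"
  unfolding noncrossing_def Let_def by simp

lemma noncrossing_sym1: "noncrossing k I J \<Longrightarrow> noncrossing k J I"
proof -
  assume h: "noncrossing k I J"
  show "noncrossing k J I" unfolding noncrossing_unfold
  proof (intro allI impI)
    fix a b assume c: "a < b \<and> b < k \<and>
     (\<forall>l. a < l \<and> l < b \<longrightarrow> sorted_list_of_set J ! l = sorted_list_of_set I ! l)"
    then have c2: "a < b \<and> b < k \<and>
     (\<forall>l. a < l \<and> l < b \<longrightarrow> sorted_list_of_set I ! l = sorted_list_of_set J ! l)" by simp
    have "\<not> arcs_cross (sorted_list_of_set I ! a) (sorted_list_of_set I ! b)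
                       (sorted_list_of_set J ! a) (sorted_list_of_set J ! b)"
      using h c2 unfolding noncrossing_unfold by blast
    then show "\<not> arcs_cross (sorted_list_of_set J ! a) (sorted_list_of_set J ! b)
                       (sorted_list_of_set I ! a) (sorted_list_of_set I ! b)"
      unfolding arcs_cross_def by blast
  qed
qed

lemma noncrossing_sym: "noncrossing k I J \<longleftrightarrow> noncrossing k J I"
  using noncrossing_sym1 by blast

lemma valley_cross:
  fixes I J :: "nat set"
  assumes fin: "finite I" "finite J" and cI: "card I = k" and cJ: "card J = k"
    and jJ: "j \<in> J" "j \<notin> I" and iI: "i \<in> I" "i \<notin> J" and ji: "j < i"
    and nosd: "\<forall>x. j<x \<and> x<i \<longrightarrow> (x\<in>I \<longleftrightarrow> x\<in>J)"
    and cnt: "rk I j = rk J j + 1"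
  shows "\<not> noncrossing k I J"
proof -
  let ?i = "sorted_list_of_set I" and ?j = "sorted_list_of_set J"
  define a where "a = rk J j"
  define b where "b = rk I i"
  have ja: "?j ! a = j" using nth_rk[OF fin(2) jJ(1)] a_def by simp
  have ib: "?i ! b = i" using nth_rk[OF fin(1) iI(1)] b_def by simp
  have bk: "b < k" using nth_rk[OF fin(1) iI(1)] b_def cI by simp
  have mideq: "{y\<in>I. j<y \<and> y<x} = {y\<in>J. j<y \<and> y<x}" if "x \<le> i" for x
    using nosd that by auto
  have bval: "b = a + 1 + card {y\<in>I. j<y \<and> y<i}"
    using split_count[OF fin(1) ji] jJ cnt unfolding a_def b_def by simp
  have rJi: "rk J i = b"
    using split_count[OF fin(2) ji] jJ mideq[of i] bval unfolding a_def by simp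
  have ab: "a < b" using bval by simp
  have jb: "i < ?j ! b"
  proof (rule ccontr)
    assume "\<not> i < ?j ! b"
    moreover have "?j ! b \<in> J" using sl_nth_mem[OF fin(2)] bk cJ by simp
    ultimately have "?j ! b < i" using iI by (metis linorder_neqE_nat)
    then have "rk J (?j ! b) < rk J i" using rk_less[OF fin(2) \<open>?j ! b \<in> J\<close>] by simp
    then show False using rk_nth[OF fin(2)] bk cJ rJi by simp
  qed
  have ia: "?i ! a < j"
  proof (rule ccontr)
    assume "\<not> ?i ! a < j"
    then have "rk I j \<le> rk I (?i ! a)" using rk_mono[OF fin(1)] by simp
    then show False using rk_nth[OF fin(1)] ab bk cI cnt a_def by simp
  qed
  have mid: "?i ! l = ?j ! l" if l: "a < l" "l < b" for l
  proof -
    define x where "x = ?i ! l"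
    have lk: "l < k" using l bk by simp
    have xI: "x \<in> I" using sl_nth_mem[OF fin(1)] lk cI x_def by simp
    have rx: "rk I x = l" using rk_nth[OF fin(1)] lk cI x_def by simp
    have xi: "x < i" using sl_nth_less_iff[OF fin(1), of l b] l bk cI x_def ib by simp
    have jx: "j < x"
    proof (rule ccontr)
      assume "\<not> j < x"
      then have "x < j" using xI jJ by (metis linorder_neqE_nat)
      then have "rk I x < rk I j" using rk_less[OF fin(1) xI] by simp
      then show False using rx cnt l a_def by simp
    qed
    have xJ: "x \<in> J" using nosd jx xi xI by blast
    have "rk I x = rk J x"
      using split_count[OF fin(1) jx] split_count[OF fin(2) jx] jJ cnt mideq[of x] xi by simp
    then have "rk J x = l" using rx by simp
    then show ?thesis using nth_rk[OF fin(2) xJ] x_def by simp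
  qed
  have "arcs_cross (?i ! a) (?i ! b) (?j ! a) (?j ! b)"
    unfolding arcs_cross_def ja ib using ia ji jb by simp
  then show ?thesis unfolding noncrossing_unfold using ab bk mid by blast
qed

lemma dIVT:
  fixes G :: "nat \<Rightarrow> int"
  assumes step: "\<And>t. G (Suc t) \<le> G t + 1"
  shows "a \<le> b \<Longrightarrow> G a \<le> v \<Longrightarrow> v < G b \<Longrightarrow> \<exists>u. a \<le> u \<and> u < b \<and> G u = v"
proof (induction b)
  case 0 then show ?case by simp
next
  case (Suc b)
  show ?case
  proof (cases "a \<le> b \<and> v < G b")
    case True
    then show ?thesis using Suc.IH Suc.prems by force
  next
    case False
    show ?thesis
    proof (cases "a \<le> b")
      case True
      then have "G b \<le> v" using False by simp
      moreover have "v \<le> G b" using step[of b] Suc.prems by simp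
      ultimately show ?thesis using True by (intro exI[of _ b]) simp
    next
      case False
      then have "a = Suc b" using Suc.prems by simp
      then show ?thesis using Suc.prems by simp
    qed
  qed
qed


definition rot :: "nat \<Rightarrow> nat \<Rightarrow> nat \<Rightarrow> nat" where
  "rot n s x = (if s < x then x - s else x + n - s)"

lemma cshift_pt:
  assumes "s < n" "1 \<le> x" "x \<le> n"
  shows "nat ((int x + int (n - s) - 1) mod int n) + 1 = rot n s x"
proof (cases "s < x")
  case True
  have e: "int x + int (n - s) - 1 = (int x - int s - 1) + int n" using assms by simp
  have "(int x + int (n - s) - 1) mod int n = ((int x - int s - 1) + int n) mod int n"
    by (simp only: e)
  also have "\<dots> = (int x - int s - 1) mod int n" by (rule mod_add_self2)
  finally have "(int x + int (n - s) - 1) mod int n = (int x - int s - 1) mod int n" .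
  also have "\<dots> = int x - int s - 1" using True assms by (intro mod_pos_pos_trivial) auto
  finally show ?thesis using True unfolding rot_def by simp
next
  case False
  have "(int x + int (n - s) - 1) mod int n = int x + int (n - s) - 1"
    using False assms by (intro mod_pos_pos_trivial) auto
  then show ?thesis using False assms unfolding rot_def by simp
qed

lemma cshift_rot:
  assumes "s < n" "X \<subseteq> {1..n}"
  shows "cshift n (int (n - s)) X = rot n s ` X"
  unfolding cshift_def using cshift_pt[OF assms(1)] assms(2) by (intro image_cong) auto

lemma rot_inj: "s < n \<Longrightarrow> inj_on (rot n s) {1..n}"
  unfolding inj_on_def rot_def by (auto split: if_splits)

lemma rot_lt1: "1 \<le> u \<Longrightarrow> u \<le> j \<Longrightarrow> j \<le> n \<Longrightarrow> 1 \<le> x \<Longrightarrow> x \<le> n \<Longrightarrow>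
   (rot n (u-1) x < rot n (u-1) j \<longleftrightarrow> u \<le> x \<and> x < j)"
  unfolding rot_def by auto

lemma rot_lt2: "1 \<le> j \<Longrightarrow> j < u \<Longrightarrow> u \<le> n \<Longrightarrow> 1 \<le> x \<Longrightarrow> x \<le> n \<Longrightarrow>
   (rot n (u-1) x < rot n (u-1) j \<longleftrightarrow> x < j \<or> u \<le> x)"
  unfolding rot_def by auto

lemma rot_between:
  assumes "1 \<le> u" "u \<le> n" "1 \<le> j" "j < i" "i \<le> n" "u \<le> j \<or> i < u" "1 \<le> x" "x \<le> n"
  shows "rot n (u-1) j < rot n (u-1) i"
    "rot n (u-1) j < rot n (u-1) x \<Longrightarrow> rot n (u-1) x < rot n (u-1) i \<Longrightarrow> j < x \<and> x < i"
  using assms unfolding rot_def by (auto split: if_splits)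

lemma count_rot:
  assumes S: "S \<subseteq> {1..n}" "card S = k" and u: "1 \<le> u" "u \<le> n" and j: "1 \<le> j" "j \<le> n"
    and c: "u \<le> j \<or> j < u"
  shows "int (card {x\<in>S. rot n (u-1) x < rot n (u-1) j}) =
      int (rk S j) - int (rk S u) + (if u \<le> j then 0 else int k)"
proof -
  have fin: "finite S" using S finite_subset by blast
  show ?thesis
  proof (cases "u \<le> j")
    case True
    have e: "{x\<in>S. rot n (u-1) x < rot n (u-1) j} = {x\<in>S. u \<le> x \<and> x < j}"
      using rot_lt1[OF u(1) True j(2)] S by auto
    have e2: "{x\<in>S. x<j} = {x\<in>S. x<u} \<union> {x\<in>S. u \<le> x \<and> x < j}" using True by auto
    have "rk S j = rk S u + card {x\<in>S. u \<le> x \<and> x < j}"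
      unfolding rk_def e2 using fin by (subst card_Un_disjoint) auto
    then show ?thesis unfolding e using True by simp
  next
    case False
    then have ju: "j < u" by simp
    have e: "{x\<in>S. rot n (u-1) x < rot n (u-1) j} = {x\<in>S. x<j} \<union> {x\<in>S. u \<le> x}"
      using rot_lt2[OF j(1) ju u(2)] S by auto
    have e3: "S = {x\<in>S. x<u} \<union> {x\<in>S. u \<le> x}" by auto
    have cS: "card S = rk S u + card {x\<in>S. u \<le> x}"
      unfolding rk_def using fin by (subst e3, subst card_Un_disjoint) auto
    have "card ({x\<in>S. x<j} \<union> {x\<in>S. u \<le> x}) = rk S j + card {x\<in>S. u \<le> x}"
      unfolding rk_def using fin ju by (subst card_Un_disjoint) auto
    then show ?thesis unfolding e using False cS S(2) by simp
  qed
qed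

lemma valley_shift:
  fixes I J :: "nat set"
  assumes IJ: "I \<subseteq> {1..n}" "J \<subseteq> {1..n}" and cI: "card I = k" and cJ: "card J = k"
    and jJ: "j \<in> J" "j \<notin> I" and iI: "i \<in> I" "i \<notin> J" and ji: "j < i"
    and nosd: "\<forall>x. j<x \<and> x<i \<longrightarrow> (x\<in>I \<longleftrightarrow> x\<in>J)"
    and u: "1 \<le> u" "u \<le> n" and uc: "u \<le> j \<or> i < u"
    and cnt: "int (rk I j) - int (rk J j) - (int (rk I u) - int (rk J u)) = 1"
  shows "\<exists>r\<in>{1..n}. \<not> noncrossing k (cshift n (int r) I) (cshift n (int r) J)"
proof -
  define s where "s = u - 1"
  have sn: "s < n" using u s_def by simp
  let ?f = "rot n s"
  have jr: "1 \<le> j" "j \<le> n" using jJ IJ by auto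
  have ir: "1 \<le> i" "i \<le> n" using iI IJ by auto
  have finI: "finite I" and finJ: "finite J" using IJ finite_subset by blast+
  have rinj: "inj_on ?f {1..n}" using rot_inj[OF sn] .
  have injI: "inj_on ?f I" and injJ: "inj_on ?f J" using rinj IJ inj_on_subset by blast+
  have cI': "card (?f ` I) = k" using card_image[OF injI] cI by simp
  have cJ': "card (?f ` J) = k" using card_image[OF injJ] cJ by simp
  have jJ': "?f j \<in> ?f ` J" "?f j \<notin> ?f ` I"
    using jJ inj_on_image_mem_iff[OF rinj, of j I] IJ jr by auto
  have iI': "?f i \<in> ?f ` I" "?f i \<notin> ?f ` J"
    using iI inj_on_image_mem_iff[OF rinj, of i J] IJ ir by auto
  have btw: "?f j < ?f i" using rot_between(1)[OF u jr(1) ji ir(2) uc jr] s_def by simp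
  have nosd': "\<forall>y. ?f j < y \<and> y < ?f i \<longrightarrow> (y \<in> ?f ` I \<longleftrightarrow> y \<in> ?f ` J)"
  proof (intro allI impI)
    fix y assume y: "?f j < y \<and> y < ?f i"
    have key: "x \<in> J" if "x \<in> I" "y = ?f x" for x
    proof -
      have "1 \<le> x" "x \<le> n" using that IJ by auto
      then have "j < x \<and> x < i" using rot_between(2)[OF u jr(1) ji ir(2) uc] y that s_def by auto
      then show ?thesis using nosd that by blast
    qed
    have key2: "x \<in> I" if "x \<in> J" "y = ?f x" for x
    proof -
      have "1 \<le> x" "x \<le> n" using that IJ by auto
      then have "j < x \<and> x < i" using rot_between(2)[OF u jr(1) ji ir(2) uc] y that s_def by auto
      then show ?thesis using nosd that by blast
    qed
    show "y \<in> ?f ` I \<longleftrightarrow> y \<in> ?f ` J" using key key2 by blast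
  qed
  have rkimg: "rk (?f ` S) (?f j) = card {x\<in>S. ?f x < ?f j}" if "S \<subseteq> {1..n}" for S
  proof -
    have "{y\<in>?f ` S. y < ?f j} = ?f ` {x\<in>S. ?f x < ?f j}"
    proof (intro set_eqI iffI)
      fix y assume "y \<in> {y\<in>?f ` S. y < ?f j}"
      then obtain x where "x \<in> S" "y = ?f x" "y < ?f j" by auto
      then show "y \<in> ?f ` {x\<in>S. ?f x < ?f j}" by auto
    next
      fix y assume "y \<in> ?f ` {x\<in>S. ?f x < ?f j}"
      then obtain x where "x \<in> S" "y = ?f x" "?f x < ?f j" by auto
      then show "y \<in> {y\<in>?f ` S. y < ?f j}" by auto
    qed
    moreover have "inj_on ?f {x\<in>S. ?f x < ?f j}"
      by (rule inj_on_subset[OF rinj]) (use that in auto)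
    ultimately show ?thesis unfolding rk_def by (metis (no_types, lifting) card_image)
  qed
  have uc2: "u \<le> j \<or> j < u" by auto
  have cI0: "int (card {x\<in>I. rot n s x < rot n s j}) = int (rk I j) - int (rk I u) + (if u \<le> j then 0 else int k)"
    using count_rot[OF IJ(1) cI u jr uc2] unfolding s_def .
  have cJ0: "int (card {x\<in>J. rot n s x < rot n s j}) = int (rk J j) - int (rk J u) + (if u \<le> j then 0 else int k)"
    using count_rot[OF IJ(2) cJ u jr uc2] unfolding s_def .
  have cntI: "int (rk (?f ` I) (?f j)) = int (rk I j) - int (rk I u) + (if u \<le> j then 0 else int k)"
    unfolding rkimg[OF IJ(1)] by (rule cI0)
  have cntJ: "int (rk (?f ` J) (?f j)) = int (rk J j) - int (rk J u) + (if u \<le> j then 0 else int k)"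
    unfolding rkimg[OF IJ(2)] by (rule cJ0)
  have "int (rk (?f ` I) (?f j)) = int (rk (?f ` J) (?f j)) + 1" using cntI cntJ cnt by linarith
  then have cnt': "rk (?f ` I) (?f j) = rk (?f ` J) (?f j) + 1" by linarith
  have "\<not> noncrossing k (?f ` I) (?f ` J)"
    by (rule valley_cross[OF _ _ cI' cJ' jJ' iI' btw nosd' cnt']) (use finI finJ in simp_all)
  moreover have "cshift n (int (n - s)) I = ?f ` I" "cshift n (int (n - s)) J = ?f ` J"
    using cshift_rot[OF sn] IJ by auto
  moreover have "n - s \<in> {1..n}" using sn by auto
  ultimately show ?thesis by metis
qed


lemma mk_valley:
  fixes I J :: "nat set"
  assumes fin: "finite I" "finite J" and y: "y \<in> J" "y \<notin> I" and x: "x \<in> I" "x \<notin> J" and yx: "y < x"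
  shows "\<exists>j i. y \<le> j \<and> j < i \<and> i \<le> x \<and> j \<in> J \<and> j \<notin> I \<and> i \<in> I \<and> i \<notin> J
     \<and> (\<forall>z. j<z \<and> z<i \<longrightarrow> (z\<in>I \<longleftrightarrow> z\<in>J))"
proof -
  define SJ where "SJ = {z\<in>J-I. z<x}"
  have fSJ: "finite SJ" "y \<in> SJ" using fin y yx unfolding SJ_def by auto
  define j where "j = Max SJ"
  have jS: "j \<in> SJ" using fSJ unfolding j_def by (intro Max_in) auto
  have yj: "y \<le> j" using fSJ unfolding j_def by simp
  have jmax: "z \<le> j" if "z \<in> SJ" for z using fSJ that unfolding j_def by simp
  define SI where "SI = {z\<in>I-J. j<z}"
  have fSI: "finite SI" "x \<in> SI" using fin x jS unfolding SI_def SJ_def by auto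
  define i where "i = Min SI"
  have iS: "i \<in> SI" using fSI unfolding i_def by (intro Min_in) auto
  have ix: "i \<le> x" using fSI unfolding i_def by simp
  have imin: "i \<le> z" if "z \<in> SI" for z using fSI that unfolding i_def by simp
  have nosd: "\<forall>z. j<z \<and> z<i \<longrightarrow> (z\<in>I \<longleftrightarrow> z\<in>J)"
  proof (intro allI impI)
    fix z assume z: "j<z \<and> z<i"
    have "\<not> (z \<in> I \<and> z \<notin> J)"
    proof
      assume "z \<in> I \<and> z \<notin> J"
      then have "z \<in> SI" using z unfolding SI_def by auto
      then show False using imin z by fastforce
    qed
    moreover have "\<not> (z \<in> J \<and> z \<notin> I)"
    proof
      assume "z \<in> J \<and> z \<notin> I"
      then have "z \<in> SJ" using z ix unfolding SJ_def by auto
      then show False using jmax z by fastforce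
    qed
    ultimately show "z\<in>I \<longleftrightarrow> z\<in>J" by blast
  qed
  show ?thesis
    using yj iS jS ix nosd unfolding SI_def SJ_def by (intro exI[of _ j] exI[of _ i]) auto
qed

lemma rk_Suc: "finite S \<Longrightarrow> rk S (Suc t) = rk S t + (if t \<in> S then 1 else 0)"
proof -
  assume f: "finite S"
  have e: "{y\<in>S. y < Suc t} = {y\<in>S. y<t} \<union> {y\<in>S. y = t}" by auto
  have c: "card {y\<in>S. y = t} = (if t \<in> S then 1 else 0)"
  proof (cases "t \<in> S")
    case True then have "{y\<in>S. y = t} = {t}" by auto
    then show ?thesis using True by simp
  next
    case False then have "{y\<in>S. y = t} = {}" by auto
    then show ?thesis using False by simp
  qed
  show ?thesis unfolding rk_def e using f c by (subst card_Un_disjoint) auto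
qed

lemma part2_core:
  fixes I J :: "nat set"
  assumes IJ: "I \<subseteq> {1..n}" "J \<subseteq> {1..n}" and cI: "card I = k" and cJ: "card J = k"
    and y1: "y1 \<in> J" "y1 \<notin> I" and x1: "x1 \<in> I" "x1 \<notin> J"
    and y2: "y2 \<in> J" "y2 \<notin> I" and x2: "x2 \<in> I" "x2 \<notin> J"
    and ord: "y1 < x1" "x1 < y2" "y2 < x2"
  shows "\<exists>r\<in>{1..n}. \<not> noncrossing k (cshift n (int r) I) (cshift n (int r) J)"
proof -
  have fin: "finite I" "finite J" using IJ finite_subset by blast+
  obtain j1 i1 where v1: "y1 \<le> j1" "j1 < i1" "i1 \<le> x1" "j1 \<in> J" "j1 \<notin> I" "i1 \<in> I" "i1 \<notin> J"
     "\<forall>z. j1<z \<and> z<i1 \<longrightarrow> (z\<in>I \<longleftrightarrow> z\<in>J)"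
    using mk_valley[OF fin y1 x1 ord(1)] by blast
  obtain j2 i2 where v2: "y2 \<le> j2" "j2 < i2" "i2 \<le> x2" "j2 \<in> J" "j2 \<notin> I" "i2 \<in> I" "i2 \<notin> J"
     "\<forall>z. j2<z \<and> z<i2 \<longrightarrow> (z\<in>I \<longleftrightarrow> z\<in>J)"
    using mk_valley[OF fin y2 x2 ord(3)] by blast
  define G where "G t = int (rk I t) - int (rk J t)" for t
  have step: "G (Suc t) \<le> G t + 1" for t
    unfolding G_def using rk_Suc[OF fin(1), of t] rk_Suc[OF fin(2), of t] by auto
  have Gj: "G (Suc j) = G j - 1" if "j \<in> J" "j \<notin> I" for j
    unfolding G_def using rk_Suc[OF fin(1), of j] rk_Suc[OF fin(2), of j] that by auto
  have G1: "G 1 = 0"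
  proof -
    have a: "{y\<in>I. y < 1} = {}" "{y\<in>J. y < 1} = {}" using IJ by auto
    show ?thesis unfolding G_def rk_def by (simp only: a card.empty)
  qed
  have Gn: "G (Suc n) = 0"
  proof -
    have a: "{y\<in>I. y < Suc n} = I" "{y\<in>J. y < Suc n} = J" using IJ by auto
    show ?thesis unfolding G_def rk_def by (simp only: a cI cJ)
  qed
  have r1: "1 \<le> j1" "i1 \<le> n" "1 \<le> j2" "i2 \<le> n" using v1 v2 IJ by auto
  have VS: "\<exists>r\<in>{1..n}. \<not> noncrossing k (cshift n (int r) I) (cshift n (int r) J)"
    if "j \<in> J" "j \<notin> I" "i \<in> I" "i \<notin> J" "j < i" "\<forall>z. j<z \<and> z<i \<longrightarrow> (z\<in>I \<longleftrightarrow> z\<in>J)"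
       "1 \<le> u" "u \<le> n" "u \<le> j \<or> i < u" "G u = G j - 1" for j i u
    by (rule valley_shift[OF IJ cI cJ that(1-9)]) (use that(10) in \<open>simp add: G_def\<close>)
  show ?thesis
  proof (cases "G j1 \<le> G j2")
    case True
    have "Suc j1 \<le> j2" using v1 v2 ord by simp
    moreover have "G (Suc j1) \<le> G j2 - 1" using Gj[OF v1(4,5)] True by simp
    ultimately obtain u where u: "Suc j1 \<le> u" "u < j2" "G u = G j2 - 1"
      using dIVT[of G, OF step, of "Suc j1" j2 "G j2 - 1"] by auto
    show ?thesis by (rule VS[OF v2(4-7) v2(2) v2(8), of u]) (use u r1 v2 in auto)
  next
    case False
    show ?thesis
    proof (cases "1 \<le> G j1")
      case True
      obtain u where u: "1 \<le> u" "u < j1" "G u = G j1 - 1"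
        using dIVT[of G, OF step, of 1 j1 "G j1 - 1"] True G1 r1 by auto
      show ?thesis by (rule VS[OF v1(4-7) v1(2) v1(8), of u]) (use u r1 v1 in auto)
    next
      case False2: False
      have "Suc j2 \<le> Suc n" using r1 v2 by simp
      moreover have "G (Suc j2) \<le> G j1 - 1" using Gj[OF v2(4,5)] False by simp
      moreover have "G j1 - 1 < G (Suc n)" using Gn False2 by simp
      ultimately obtain u where u: "Suc j2 \<le> u" "u < Suc n" "G u = G j1 - 1"
        using dIVT[of G, OF step, of "Suc j2" "Suc n" "G j1 - 1"] by auto
      show ?thesis by (rule VS[OF v1(4-7) v1(2) v1(8), of u]) (use u r1 v1 v2 ord in auto)
    qed
  qed
qed


definition sh :: "nat \<Rightarrow> int \<Rightarrow> nat \<Rightarrow> nat" where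
  "sh n i x = nat ((int x + i - 1) mod int n) + 1"

lemma cshift_sh: "cshift n i X = sh n i ` X"
  unfolding cshift_def sh_def by simp

lemma sh_comp: "n > 0 \<Longrightarrow> sh n a (sh n b x) = sh n (a+b) x"
proof -
  assume n: "n > 0"
  have "int (nat ((int x + b - 1) mod int n)) = (int x + b - 1) mod int n" using n by simp
  then have h1: "int (sh n b x) + a - 1 = (int x + b - 1) mod int n + a" unfolding sh_def by simp
  have h2: "((int x + b - 1) mod int n + a) mod int n = ((int x + b - 1) + a) mod int n"
    by (rule mod_add_left_eq)
  have h3: "(int x + b - 1) + a = int x + (a + b) - 1" by simp
  have "(int (sh n b x) + a - 1) mod int n = (int x + (a + b) - 1) mod int n"
    unfolding h1 h2 h3 ..
  then show ?thesis unfolding sh_def[of n a "sh n b x"] by (simp add: sh_def[of n "a+b"])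
qed

lemma sh_id: "n > 0 \<Longrightarrow> int n dvd i \<Longrightarrow> 1 \<le> x \<Longrightarrow> x \<le> n \<Longrightarrow> sh n i x = x"
proof -
  assume a: "n > 0" "int n dvd i" "1 \<le> x" "x \<le> n"
  then obtain q where q: "i = int n * q" by (auto elim: dvdE)
  have e: "int x + i - 1 = (int x - 1) + q * int n" unfolding q by simp
  have "(int x + i - 1) mod int n = (int x - 1) mod int n" unfolding e by (rule mod_mult_self1)
  also have "\<dots> = int x - 1" using a by (intro mod_pos_pos_trivial) auto
  finally show ?thesis unfolding sh_def using a by simp
qed

lemma sh_range: "n > 0 \<Longrightarrow> sh n i x \<in> {1..n}"
proof -
  assume n: "n > 0"
  have "(int x + i - 1) mod int n < int n" "0 \<le> (int x + i - 1) mod int n" using n by simp_all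
  then show ?thesis unfolding sh_def by auto
qed

lemma sh_inj: "n > 0 \<Longrightarrow> inj_on (sh n i) {1..n}"
proof (rule inj_on_inverseI)
  fix x assume n: "n > 0" and x: "x \<in> {1..n}"
  show "sh n (-i) (sh n i x) = x" using sh_comp[OF n] sh_id[OF n, of 0 x] x by simp
qed

lemma cshift_sub: "n > 0 \<Longrightarrow> cshift n i X \<subseteq> {1..n}"
  unfolding cshift_sh using sh_range by blast

lemma cshift_card: "n > 0 \<Longrightarrow> X \<subseteq> {1..n} \<Longrightarrow> card (cshift n i X) = card X"
  unfolding cshift_sh by (rule card_image) (use sh_inj inj_on_subset in blast)

lemma cshift_Vkn: "n > 0 \<Longrightarrow> X \<in> Vkn k n \<Longrightarrow> cshift n i X \<in> Vkn k n"
  unfolding Vkn_def using cshift_sub cshift_card by auto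

lemma cshift_comp: "n > 0 \<Longrightarrow> cshift n a (cshift n b X) = cshift n (a+b) X"
  unfolding cshift_sh image_image using sh_comp by simp

lemma cshift_id: "n > 0 \<Longrightarrow> int n dvd i \<Longrightarrow> X \<subseteq> {1..n} \<Longrightarrow> cshift n i X = X"
proof -
  assume a: "n > 0" "int n dvd i" "X \<subseteq> {1..n}"
  have "sh n i ` X = id ` X" using sh_id[OF a(1,2)] a(3) by (intro image_cong) auto
  then show ?thesis unfolding cshift_sh by simp
qed

lemma polyvert_sh:
  assumes n: "n > 0"
  shows "polyvert n (sh n i x) = cis (2*pi*real_of_int i/real n) * polyvert n x"
proof -
  define w where "w = (int x + i - 1) div int n"
  have dm: "int x + i - 1 = int n * w + (int x + i - 1) mod int n" unfolding w_def by simp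
  have nn: "0 \<le> (int x + i - 1) mod int n" using n by simp
  have e: "int (sh n i x) = int x + i - int n * w" unfolding sh_def using dm nn by simp
  have "real (sh n i x) = real_of_int (int x + i - int n * w)"
    by (metis e of_int_of_nat_eq)
  then have R: "real (sh n i x) = real_of_int i + real x - real_of_int w * real n" by simp
  have r: "2*pi*real (sh n i x)/real n = 2*pi*real_of_int i/real n + 2*pi*real x/real n + 2*pi*real_of_int (-w)"
    unfolding R using n by (simp add: field_simps)
  have c1: "cis (2*pi*real_of_int (-w)) = 1" by (rule cis_multiple_2pi) simp
  have "cis (2*pi*real_of_int i/real n + 2*pi*real x/real n + 2*pi*real_of_int (-w))
     = cis (2*pi*real_of_int i/real n) * cis (2*pi*real x/real n) * cis (2*pi*real_of_int (-w))"
    by (metis cis_mult)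
  then show ?thesis unfolding polyvert_def r c1 by simp
qed

lemma ws_shift:
  assumes n: "n > 0" and IJ: "I \<subseteq> {1..n}" "J \<subseteq> {1..n}"
  shows "weakly_separated n (cshift n i I) (cshift n i J) \<longleftrightarrow> weakly_separated n I J"
proof -
  define c where "c = cis (2*pi*real_of_int i/real n)"
  define f where "f = (\<lambda>z::complex. c * z)"
  have lin: "linear f" unfolding f_def by simp
  have finj: "inj f" unfolding f_def c_def inj_def by simp
  have inj: "inj_on (sh n i) {1..n}" using sh_inj[OF n] .
  have d1: "cshift n i I - cshift n i J = sh n i ` (I - J)"
    unfolding cshift_sh using inj_on_image_set_diff[OF inj] IJ by auto
  have d2: "cshift n i J - cshift n i I = sh n i ` (J - I)"
    unfolding cshift_sh using inj_on_image_set_diff[OF inj] IJ by auto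
  have pv: "polyvert n ` sh n i ` A = f ` polyvert n ` A" for A
    unfolding image_image f_def c_def using polyvert_sh[OF n] by simp
  have h: "convex hull (polyvert n ` sh n i ` A) = f ` (convex hull (polyvert n ` A))" for A
    unfolding pv by (rule convex_hull_linear_image[OF lin, symmetric])
  show ?thesis unfolding weakly_separated_def d1 d2 h
    using image_Int[OF finj] by (metis image_is_empty)
qed


theorem proposition5p2:
  fixes k n :: nat
  assumes "1 \<le> k" and "k \<le> n - 1"
  shows "(\<forall>I\<in>Vkn k n. \<forall>J\<in>Vkn k n. weakly_separated n I J \<longrightarrow> noncrossing k I J)
    \<and> (\<forall>I\<in>Vkn k n. \<forall>J\<in>Vkn k n.
          (\<forall>i\<in>{1..n}. noncrossing k (cshift n (int i) I) (cshift n (int i) J))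
          \<longrightarrow> weakly_separated n I J)
    \<and> DeltaSep k n = (\<Inter>i\<in>{1..n}. shift_complex n (int i) (DeltaNC k n))"
proof -
  have n0: "n > 0" using assms by simp
  have V: "I \<subseteq> {1..n}" "card I = k" "finite I" if "I \<in> Vkn k n" for I
    using that finite_subset[of I "{1..n}"] unfolding Vkn_def by auto
  have PA: "\<forall>I\<in>Vkn k n. \<forall>J\<in>Vkn k n. weakly_separated n I J \<longrightarrow> noncrossing k I J"
  proof (intro ballI impI)
    fix I J assume I: "I \<in> Vkn k n" and J: "J \<in> Vkn k n" and ws: "weakly_separated n I J"
    note VI = V[OF I] and VJ = V[OF J]
    have nint: "\<not> intl (I-J) (J-I)" "\<not> intl (J-I) (I-J)" using ws ws_iff[OF VI(1) VJ(1)] by auto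
    show "noncrossing k I J"
    proof (rule ccontr)
      assume "\<not> noncrossing k I J"
      then obtain a b where ab: "a < b" "b < k"
        and mid: "\<forall>l. a < l \<and> l < b \<longrightarrow> sorted_list_of_set I ! l = sorted_list_of_set J ! l"
        and cr: "arcs_cross (sorted_list_of_set I ! a) (sorted_list_of_set I ! b)
                       (sorted_list_of_set J ! a) (sorted_list_of_set J ! b)"
        unfolding noncrossing_unfold by blast
      have mid': "\<forall>l. a < l \<and> l < b \<longrightarrow> sorted_list_of_set J ! l = sorted_list_of_set I ! l"
        using mid by simp
      from cr show False unfolding arcs_cross_def
      proof (elim disjE conjE)
        assume o: "sorted_list_of_set I ! a < sorted_list_of_set J ! a"
          "sorted_list_of_set J ! a < sorted_list_of_set I ! b"
          "sorted_list_of_set I ! b < sorted_list_of_set J ! b"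
        obtain x y where "x \<in> I - J" "x < sorted_list_of_set J ! a" "sorted_list_of_set J ! a \<in> J - I"
          "sorted_list_of_set I ! b \<in> I - J" "sorted_list_of_set I ! b < y" "y \<in> J - I"
          using cross_intl[OF VI(3) VJ(3) VI(2) VJ(2) ab mid o] by blast
        then have "intl (I-J) (J-I)" unfolding intl_def using o(2) by blast
        then show False using nint by simp
      next
        assume o: "sorted_list_of_set J ! a < sorted_list_of_set I ! a"
          "sorted_list_of_set I ! a < sorted_list_of_set J ! b"
          "sorted_list_of_set J ! b < sorted_list_of_set I ! b"
        obtain x y where "x \<in> J - I" "x < sorted_list_of_set I ! a" "sorted_list_of_set I ! a \<in> I - J"
          "sorted_list_of_set J ! b \<in> J - I" "sorted_list_of_set J ! b < y" "y \<in> I - J"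
          using cross_intl[OF VJ(3) VI(3) VJ(2) VI(2) ab mid' o] by blast
        then have "intl (J-I) (I-J)" unfolding intl_def using o(2) by blast
        then show False using nint by simp
      qed
    qed
  qed
  have PB: "\<forall>I\<in>Vkn k n. \<forall>J\<in>Vkn k n.
          (\<forall>i\<in>{1..n}. noncrossing k (cshift n (int i) I) (cshift n (int i) J))
          \<longrightarrow> weakly_separated n I J"
  proof (intro ballI impI)
    fix I J assume I: "I \<in> Vkn k n" and J: "J \<in> Vkn k n"
      and H: "\<forall>i\<in>{1..n}. noncrossing k (cshift n (int i) I) (cshift n (int i) J)"
    note VI = V[OF I] and VJ = V[OF J]
    have "\<not> intl (J-I) (I-J)"
    proof
      assume "intl (J-I) (I-J)"
      then obtain a b c d where h: "a<b" "b<c" "c<d" "a\<in>J-I" "b\<in>I-J" "c\<in>J-I" "d\<in>I-J"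
        unfolding intl_def by blast
      have "\<exists>r\<in>{1..n}. \<not> noncrossing k (cshift n (int r) I) (cshift n (int r) J)"
        by (rule part2_core[OF VI(1) VJ(1) VI(2) VJ(2), of a b c d]) (use h in auto)
      then show False using H by blast
    qed
    moreover have "\<not> intl (I-J) (J-I)"
    proof
      assume "intl (I-J) (J-I)"
      then obtain a b c d where h: "a<b" "b<c" "c<d" "a\<in>I-J" "b\<in>J-I" "c\<in>I-J" "d\<in>J-I"
        unfolding intl_def by blast
      have "\<exists>r\<in>{1..n}. \<not> noncrossing k (cshift n (int r) J) (cshift n (int r) I)"
        by (rule part2_core[OF VJ(1) VI(1) VJ(2) VI(2), of a b c d]) (use h in auto)
      then show False using H noncrossing_sym by blast
    qed
    ultimately show "weakly_separated n I J" using ws_iff[OF VI(1) VJ(1)] by simp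
  qed
  have PC: "DeltaSep k n = (\<Inter>i\<in>{1..n}. shift_complex n (int i) (DeltaNC k n))"
  proof
    show "DeltaSep k n \<subseteq> (\<Inter>i\<in>{1..n}. shift_complex n (int i) (DeltaNC k n))"
    proof
      fix F assume F: "F \<in> DeltaSep k n"
      have FV: "F \<subseteq> Vkn k n" and Fws: "\<forall>I\<in>F. \<forall>J\<in>F. weakly_separated n I J"
        using F unfolding DeltaSep_def by auto
      show "F \<in> (\<Inter>i\<in>{1..n}. shift_complex n (int i) (DeltaNC k n))"
      proof
        fix i assume i: "i \<in> {1..n}"
        define G where "G = (\<lambda>X. cshift n (int n - int i) X) ` F"
        have bk: "cshift n (int i) (cshift n (int n - int i) X) = X" if "X \<in> F" for X
          using cshift_comp[OF n0] cshift_id[OF n0, of "int n" X] V[of X] FV that by auto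
        have FG: "F = (\<lambda>X. cshift n (int i) X) ` G"
          unfolding G_def image_image using bk by simp
        have GV: "G \<subseteq> Vkn k n" unfolding G_def using FV cshift_Vkn[OF n0] by blast
        have "\<forall>I\<in>G. \<forall>J\<in>G. noncrossing k I J"
        proof (intro ballI)
          fix I' J' assume "I' \<in> G" "J' \<in> G"
          then obtain I J where IJ: "I \<in> F" "J \<in> F" "I' = cshift n (int n - int i) I"
            "J' = cshift n (int n - int i) J" unfolding G_def by blast
          have "weakly_separated n I' J'"
            using ws_shift[OF n0, of I J] V[of I] V[of J] IJ FV Fws by auto
          moreover have "I' \<in> Vkn k n" "J' \<in> Vkn k n" using IJ FV cshift_Vkn[OF n0] by auto
          ultimately show "noncrossing k I' J'" using PA by blast
        qed
        then have "G \<in> DeltaNC k n" using GV unfolding DeltaNC_def by blast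
        then show "F \<in> shift_complex n (int i) (DeltaNC k n)"
          unfolding shift_complex_def using FG by blast
      qed
    qed
  next
    show "(\<Inter>i\<in>{1..n}. shift_complex n (int i) (DeltaNC k n)) \<subseteq> DeltaSep k n"
    proof
      fix F assume F: "F \<in> (\<Inter>i\<in>{1..n}. shift_complex n (int i) (DeltaNC k n))"
      have Fm: "\<exists>G. G \<in> DeltaNC k n \<and> F = (\<lambda>X. cshift n (int m) X) ` G" if "m \<in> {1..n}" for m
        using F that unfolding shift_complex_def by blast
      obtain Gn where Gn: "Gn \<in> DeltaNC k n" "F = (\<lambda>X. cshift n (int n) X) ` Gn"
        using Fm[of n] n0 by auto
      have FV: "F \<subseteq> Vkn k n" using Gn cshift_Vkn[OF n0] unfolding DeltaNC_def by blast
      have "\<forall>I\<in>F. \<forall>J\<in>F. weakly_separated n I J"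
      proof (intro ballI)
        fix I J assume I: "I \<in> F" and J: "J \<in> F"
        have "\<forall>i\<in>{1..n}. noncrossing k (cshift n (int i) I) (cshift n (int i) J)"
        proof
          fix i assume i: "i \<in> {1..n}"
          define m where "m = (if i = n then n else n - i)"
          have m: "m \<in> {1..n}" using i n0 unfolding m_def by auto
          have dv: "int n dvd (int i + int m)"
          proof (cases "i = n")
            case True then show ?thesis unfolding m_def by simp
          next
            case False then have "int i + int m = int n" unfolding m_def using i by auto
            then show ?thesis by simp
          qed
          obtain G where G: "G \<in> DeltaNC k n" "F = (\<lambda>X. cshift n (int m) X) ` G"
            using Fm[OF m] by blast
          obtain I0 where I0: "I0 \<in> G" "I = cshift n (int m) I0" using I G by blast
          obtain J0 where J0: "J0 \<in> G" "J = cshift n (int m) J0" using J G by blast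
          have GV: "G \<subseteq> Vkn k n" "\<forall>I\<in>G. \<forall>J\<in>G. noncrossing k I J"
            using G unfolding DeltaNC_def by auto
          have "cshift n (int i) I = I0"
            using I0 cshift_comp[OF n0] cshift_id[OF n0 dv] V[of I0] GV by auto
          moreover have "cshift n (int i) J = J0"
            using J0 cshift_comp[OF n0] cshift_id[OF n0 dv] V[of J0] GV by auto
          ultimately show "noncrossing k (cshift n (int i) I) (cshift n (int i) J)"
            using GV I0 J0 by simp
        qed
        then show "weakly_separated n I J" using PB I J FV by blast
      qed
      then show "F \<in> DeltaSep k n" using FV unfolding DeltaSep_def by blast
    qed
  qed
  show ?thesis using PA PB PC by blast
qed


end
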